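(* Let $p$ be a prime and let $B\subset\mathbf{Z}/p\mathbf{Z}$ be a balanced set. Then there exists $g\in -B$ such that $\Sigma(B+g)=\mathbf{Z}/p\mathbf{Z}$.
   Context: A subset $B$ of an abelian group is balanced if for every $b\in B$ there exist distinct $b_1,b_2\in B$ with $2b=b_1+b_2$. For a finite set $S$, $\Sigma(S)=\{\sum_{s\in S'}s: S'\subseteq S\}$ is the set of subset sums. Also $-B=\{-b:b\in B\}$ and $B+g=\{b+g:b\in B\}$. *)

theory Defs
  imports Main "HOL-Number_Theory.Cong"
begin

text \<open>Z/pZ is represented by the canonical residues {0..<p} of int,
  with all operations taken modulo p.\<close>

definition zmod :: "int \<Rightarrow> int set" where
  "zmod p = {0..<p}"

definition balanced :: "int \<Rightarrow> int set \<Rightarrow> bool" where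
  "balanced p B \<longleftrightarrow> B \<subseteq> zmod p \<and>
     (\<forall>b\<in>B. \<exists>b1\<in>B. \<exists>b2\<in>B. b1 \<noteq> b2 \<and> [2 * b = b1 + b2] (mod p))"

definition subset_sums :: "int \<Rightarrow> int set \<Rightarrow> int set" where
  "subset_sums p S = {(\<Sum>S') mod p | S'. S' \<subseteq> S}"

definition neg_set :: "int \<Rightarrow> int set \<Rightarrow> int set" where
  "neg_set p B = (\<lambda>b. (- b) mod p) ` B"

definition shift_set :: "int \<Rightarrow> int set \<Rightarrow> int \<Rightarrow> int set" where
  "shift_set p B g = (\<lambda>b. (b + g) mod p) ` B"

end

theory Submission
  imports Defs
begin

fun lay :: "int \<Rightarrow> (int \<Rightarrow> int) \<Rightarrow> (int \<Rightarrow> int) \<Rightarrow> nat \<Rightarrow> int set" where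
  "lay s yf zf 0 = {s}"
| "lay s yf zf (Suc n) = lay s yf zf n \<union> {c. yf c \<in> lay s yf zf n \<or> zf c \<in> lay s yf zf n}"

definition fire :: "(int \<Rightarrow> nat) \<Rightarrow> int \<Rightarrow> int \<Rightarrow> int \<Rightarrow> int \<Rightarrow> nat" where
  "fire v a y z = (\<lambda>c. if c = a then v c - 2 else if c = y \<or> c = z then v c + 1 else v c)"

lemma fire_sum:
  fixes f :: "int \<Rightarrow> int"
  assumes "finite C" "a \<in> C" "y \<in> C" "z \<in> C" "a \<noteq> y" "a \<noteq> z" "y \<noteq> z" "v a \<ge> 2"
  shows "(\<Sum>c\<in>C. int (fire v a y z c) * f c) = (\<Sum>c\<in>C. int (v c) * f c) - 2 * f a + f y + f z"
proof -
  have "\<And>c. int (fire v a y z c) * f c = int (v c) * f c + (if c = y then f c else 0)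
           + (if c = z then f c else 0) - (if c = a then 2 * f c else 0)"
    using assms(5-8) by (auto simp: fire_def of_nat_diff algebra_simps)
  hence "(\<Sum>c\<in>C. int (fire v a y z c) * f c) = (\<Sum>c\<in>C. int (v c) * f c + (if c = y then f c else 0)
           + (if c = z then f c else 0) - (if c = a then 2 * f c else 0))" by simp
  also have "\<dots> = (\<Sum>c\<in>C. int (v c) * f c) + (\<Sum>c\<in>C. if c = y then f c else 0)
       + (\<Sum>c\<in>C. if c = z then f c else 0) - (\<Sum>c\<in>C. if c = a then 2 * f c else 0)"
    by (simp add: sum.distrib sum_subtractf)
  also have "\<dots> = (\<Sum>c\<in>C. int (v c) * f c) - 2 * f a + f y + f z"
    using assms(1-4) by (simp add: sum.delta')
  finally show ?thesis .
qed

locale chipf =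
  fixes p s :: int and C :: "int set" and yf zf :: "int \<Rightarrow> int"
  assumes prime: "prime p"
  and Csub: "C \<subseteq> {0..<p}" and fin: "finite C" and sC: "s \<in> C"
  and clo: "\<And>c. c \<in> C \<Longrightarrow> yf c \<in> C \<and> zf c \<in> C"
  and part: "\<And>c. c \<in> C \<Longrightarrow> yf c \<noteq> zf c \<and> [2*c = yf c + zf c] (mod p)"
  and reach: "\<And>c. c \<in> C \<Longrightarrow> \<exists>n. c \<in> lay s yf zf n"
begin

abbreviation L where "L \<equiv> lay s yf zf"

definition d :: "int \<Rightarrow> nat" where "d c = (LEAST n. c \<in> L n)"

lemma lay_mono: "m \<le> n \<Longrightarrow> L m \<subseteq> L n"
  by (induction n) (auto simp: le_Suc_eq)

lemma d_in: "c \<in> C \<Longrightarrow> c \<in> L (d c)"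
  unfolding d_def using reach by (metis LeastI_ex)

lemma d_le: "c \<in> L n \<Longrightarrow> d c \<le> n"
  unfolding d_def by (rule Least_le)

lemma d0: "c \<in> C \<Longrightarrow> d c = 0 \<longleftrightarrow> c = s"
proof
  assume "c \<in> C" "d c = 0" thus "c = s" using d_in[of c] by simp
next
  assume "c = s" thus "d c = 0" using d_le[of s 0] by simp
qed

lemma d_partner_ge: "c \<in> C \<Longrightarrow> x \<in> {yf c, zf c} \<Longrightarrow> d c \<le> Suc (d x)"
proof -
  assume c: "c \<in> C" and x: "x \<in> {yf c, zf c}"
  have "x \<in> C" using clo[OF c] x by auto
  hence "x \<in> L (d x)" by (rule d_in)
  hence "c \<in> L (Suc (d x))" using x by auto
  thus ?thesis by (rule d_le)
qed

lemma d_partner_lt: "c \<in> C \<Longrightarrow> c \<noteq> s \<Longrightarrow> \<exists>x\<in>{yf c, zf c}. Suc (d x) = d c"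
proof -
  assume c: "c \<in> C" "c \<noteq> s"
  then obtain k where k: "d c = Suc k" using d0 by (metis not0_implies_Suc)
  have "c \<in> L (Suc k)" using d_in[OF c(1)] k by simp
  moreover have "c \<notin> L k" using d_le[of c k] k by auto
  ultimately have "yf c \<in> L k \<or> zf c \<in> L k" by auto
  then obtain x where x: "x \<in> {yf c, zf c}" "x \<in> L k" by auto
  have "d x \<le> k" using d_le[OF x(2)] .
  moreover have "d c \<le> Suc (d x)" using d_partner_ge[OF c(1) x(1)] .
  ultimately show ?thesis using x(1) k by (intro bexI[of _ x]) auto
qed

lemma ne_partner: "c \<in> C \<Longrightarrow> yf c \<noteq> c \<and> zf c \<noteq> c"
proof -
  assume c: "c \<in> C"
  have y: "yf c \<in> C" and z: "zf c \<in> C" using clo[OF c] by auto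
  have ne: "yf c \<noteq> zf c" and cg: "[2*c = yf c + zf c] (mod p)" using part[OF c] by auto
  have rng: "0 \<le> c" "c < p" "0 \<le> yf c" "yf c < p" "0 \<le> zf c" "zf c < p"
    using Csub c y z by auto
  have A: "yf c \<noteq> c"
  proof
    assume h: "yf c = c"
    have "[c + c = c + zf c] (mod p)" using cg unfolding mult_2 h .
    hence "[c = zf c] (mod p)" using cong_add_lcancel by blast
    hence "c = zf c" using rng by (simp add: cong_def)
    thus False using ne h by simp
  qed
  have B: "zf c \<noteq> c"
  proof
    assume h: "zf c = c"
    have "[c + c = yf c + c] (mod p)" using cg unfolding mult_2 h .
    hence "[c = yf c] (mod p)" using cong_add_rcancel by blast
    hence "c = yf c" using rng by (simp add: cong_def)
    thus False using ne h by simp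
  qed
  show ?thesis using A B by simp
qed

definition D :: nat where "D = Max (d ` C)"

lemma dD: "c \<in> C \<Longrightarrow> d c \<le> D"
  unfolding D_def using fin by auto

definition W :: "int \<Rightarrow> int" where "W c = 3 ^ (D - d c)"

definition tot :: "(int \<Rightarrow> nat) \<Rightarrow> int" where "tot v = (\<Sum>c\<in>C. int (v c))"
definition mu :: "(int \<Rightarrow> nat) \<Rightarrow> int" where "mu v = (\<Sum>c\<in>C. int (v c) * W c)"
definition Phi :: "(int \<Rightarrow> nat) \<Rightarrow> int" where "Phi v = (\<Sum>c\<in>C. int (v c) * (c - s)) mod p"

definition g :: int where "g = (- s) mod p"

lemma p_pos: "p > 0" using prime prime_gt_0_int by blast

lemma mu_le: "mu v \<le> tot v * 3 ^ D"
proof -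
  have "mu v \<le> (\<Sum>c\<in>C. int (v c) * 3 ^ D)"
    unfolding mu_def W_def
    by (intro sum_mono mult_left_mono) (auto intro: power_increasing)
  thus ?thesis by (simp add: tot_def sum_distrib_right)
qed

lemma base:
  assumes "\<forall>c\<in>C. c \<noteq> s \<longrightarrow> v c \<le> 1"
  shows "Phi v \<in> subset_sums p (shift_set p C g)"
proof -
  define S where "S = {c \<in> C. c \<noteq> s \<and> v c = 1}"
  have SC: "S \<subseteq> C" by (auto simp: S_def)
  have finS: "finite S" using fin SC finite_subset by blast
  have "\<And>c. c \<in> C \<Longrightarrow> int (v c) * (c - s) = (if c \<in> S then c - s else 0)"
  proof -
    fix c assume c: "c \<in> C"
    show "int (v c) * (c - s) = (if c \<in> S then c - s else 0)"
    proof (cases "c = s")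
      case False
      hence "v c = 0 \<or> v c = 1" using assms c by fastforce
      thus ?thesis using c by (auto simp: S_def)
    qed (simp add: S_def)
  qed
  hence "(\<Sum>c\<in>C. int (v c) * (c - s)) = (\<Sum>c\<in>C. if c \<in> S then c - s else 0)"
    by (rule sum.cong[OF refl])
  also have "\<dots> = (\<Sum>c\<in>S. c - s)"
    using fin SC by (simp add: sum.If_cases Int_absorb1)
  finally have e1: "Phi v = (\<Sum>c\<in>S. c - s) mod p" by (simp add: Phi_def)
  define f where "f = (\<lambda>b. (b + g) mod p)"
  have inj: "inj_on f S"
  proof
    fix x y assume xy: "x \<in> S" "y \<in> S" "f x = f y"
    hence "[x + g = y + g] (mod p)" by (simp add: f_def cong_def)
    hence "x mod p = y mod p" using cong_add_rcancel unfolding cong_def by blast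
    moreover have "x mod p = x" "y mod p = y" using xy SC Csub by auto
    ultimately show "x = y" by simp
  qed
  have "(\<Sum> (f ` S)) = (\<Sum>b\<in>S. f b)" using inj by (simp add: sum.reindex)
  hence "(\<Sum> (f ` S)) mod p = (\<Sum>b\<in>S. (b + g) mod p) mod p" by (simp add: f_def)
  also have "\<dots> = (\<Sum>b\<in>S. (b - s) mod p) mod p"
  proof -
    have "\<And>b. (b + g) mod p = (b - s) mod p" unfolding g_def by (simp add: mod_simps)
    thus ?thesis by simp
  qed
  also have "\<dots> = (\<Sum>b\<in>S. b - s) mod p" by (simp add: mod_sum_eq)
  finally have "Phi v = (\<Sum> (f ` S)) mod p" using e1 by simp
  moreover have "f ` S \<subseteq> shift_set p C g" using SC by (auto simp: shift_set_def f_def)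
  ultimately show ?thesis unfolding subset_sums_def by blast
qed

lemma main_ind:
  "tot v = t \<Longrightarrow> Phi v \<in> subset_sums p (shift_set p C g)"
proof (induction "nat (t * 3 ^ D - mu v)" arbitrary: v rule: less_induct)
  case less
  show ?case
  proof (cases "\<forall>c\<in>C. c \<noteq> s \<longrightarrow> v c \<le> 1")
    case True
    thus ?thesis by (rule base)
  next
    case False
    then obtain a where a: "a \<in> C" "a \<noteq> s" "v a \<ge> 2" by fastforce
    define y where "y = yf a"
    define z where "z = zf a"
    have yz: "y \<in> C" "z \<in> C" using clo[OF a(1)] by (auto simp: y_def z_def)
    have ne: "a \<noteq> y" "a \<noteq> z" "y \<noteq> z"
      using ne_partner[OF a(1)] part[OF a(1)] by (auto simp: y_def z_def)
    have cg: "[2*a = y + z] (mod p)" using part[OF a(1)] by (simp add: y_def z_def)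
    define v' where "v' = fire v a y z"
    have fs: "\<And>f. (\<Sum>c\<in>C. int (v' c) * f c) = (\<Sum>c\<in>C. int (v c) * f c) - 2 * f a + f y + f z"
      unfolding v'_def using fire_sum[where v=v and a=a and y=y and z=z and C=C, OF fin a(1) yz ne a(3)] by blast
    have tot': "tot v' = t"
      using fs[of "\<lambda>_. 1"] less.prems by (simp add: tot_def)
    have Phi': "Phi v' = Phi v"
    proof -
      have "[y + z = 2 * a] (mod p)" using cg by (rule cong_sym)
      hence "p dvd (y + z - 2 * a)" by (simp add: cong_iff_dvd_diff)
      then obtain k where k: "y + z - 2 * a = p * k" by (auto elim: dvdE)
      have "(\<Sum>c\<in>C. int (v' c) * (c - s)) = (\<Sum>c\<in>C. int (v c) * (c - s)) + p * k"
        using fs[of "\<lambda>c. c - s"] k by (simp add: algebra_simps)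
      thus ?thesis by (simp add: Phi_def)
    qed
    obtain x where x: "x \<in> {y, z}" "Suc (d x) = d a"
      using d_partner_lt[OF a(1,2)] by (auto simp: y_def z_def)
    have Wx: "W x = 3 * W a"
    proof -
      have "D - d x = Suc (D - d a)" using x(2) dD[OF a(1)] by simp
      thus ?thesis by (simp add: W_def)
    qed
    have Wpos: "\<And>c. W c > 0" by (simp add: W_def)
    have "W y + W z \<ge> 3 * W a + 1"
      using x(1) Wx Wpos[of y] Wpos[of z] by auto
    hence mu': "mu v' > mu v"
      using fs[of W] Wpos[of a] by (simp add: mu_def)
    have "mu v' \<le> t * 3 ^ D" using mu_le[of v'] tot' by simp
    hence "nat (t * 3 ^ D - mu v') < nat (t * 3 ^ D - mu v)" using mu' by simp
    hence "Phi v' \<in> subset_sums p (shift_set p C g)" using less.hyps tot' by blast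
    thus ?thesis using Phi' by simp
  qed
qed

lemma full: "subset_sums p (shift_set p C g) = zmod p"
proof
  show "subset_sums p (shift_set p C g) \<subseteq> zmod p"
    using p_pos by (auto simp: subset_sums_def zmod_def)
next
  show "zmod p \<subseteq> subset_sums p (shift_set p C g)"
  proof
    fix u assume u: "u \<in> zmod p"
    define a where "a = yf s"
    have aC: "a \<in> C" and as: "a \<noteq> s" using clo[OF sC] ne_partner[OF sC] by (auto simp: a_def)
    have "\<not> p dvd (a - s)"
    proof
      assume "p dvd (a - s)"
      hence "a mod p = s mod p" using cong_iff_dvd_diff[of a s p] by (simp add: cong_def)
      moreover have "a mod p = a" "s mod p = s" using aC sC Csub by auto
      ultimately show False using as by simp
    qed
    hence "coprime (a - s) p" using prime_imp_coprime[OF prime] coprime_commute by blast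
    then obtain x where x: "[(a - s) * x = 1] (mod p)" using cong_solve_coprime_int by blast
    define m where "m = nat ((u * x) mod p)"
    have im: "int m = (u * x) mod p" using p_pos by (simp add: m_def)
    define v where "v = (\<lambda>c. if c = a then m else 0)"
    have "(\<Sum>c\<in>C. int (v c) * (c - s)) = (\<Sum>c\<in>C. if c = a then int m * (c - s) else 0)"
      by (rule sum.cong) (auto simp: v_def)
    also have "\<dots> = int m * (a - s)" using fin aC by (simp add: sum.delta')
    finally have "Phi v = (int m * (a - s)) mod p" by (simp add: Phi_def)
    also have "\<dots> = ((u * x) mod p * (a - s)) mod p" using im by simp
    also have "\<dots> = ((u * x) * (a - s)) mod p" by (rule mod_mult_left_eq)
    also have "\<dots> = (u * ((a - s) * x)) mod p" by (simp add: algebra_simps)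
    also have "\<dots> = (u * 1) mod p" using x unfolding cong_def by (metis mod_mult_right_eq)
    also have "\<dots> = u" using u by (simp add: zmod_def)
    finally have "Phi v = u" .
    moreover have "Phi v \<in> subset_sums p (shift_set p C g)" using main_ind by blast
    ultimately show "u \<in> subset_sums p (shift_set p C g)" by simp
  qed
qed

end


inductive_set fwd :: "(int \<Rightarrow> int) \<Rightarrow> (int \<Rightarrow> int) \<Rightarrow> int \<Rightarrow> int set"
  for yf zf :: "int \<Rightarrow> int" and b :: int where
  fb: "b \<in> fwd yf zf b"
| fy: "x \<in> fwd yf zf b \<Longrightarrow> yf x \<in> fwd yf zf b"
| fz: "x \<in> fwd yf zf b \<Longrightarrow> zf x \<in> fwd yf zf b"

lemma fwd_sub:
  assumes "\<forall>c\<in>B. yf c \<in> B \<and> zf c \<in> B" "b \<in> B"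
  shows "fwd yf zf b \<subseteq> B"
proof
  fix x assume "x \<in> fwd yf zf b"
  thus "x \<in> B" by induction (use assms in auto)
qed

lemma fwd_trans:
  assumes "x \<in> fwd yf zf b"
  shows "fwd yf zf x \<subseteq> fwd yf zf b"
proof
  fix w assume "w \<in> fwd yf zf x"
  thus "w \<in> fwd yf zf b" by induction (use assms in \<open>auto intro: fwd.intros\<close>)
qed

lemma fwd_reach:
  assumes "x \<in> fwd yf zf c"
  shows "x \<in> lay s yf zf n \<Longrightarrow> \<exists>m. c \<in> lay s yf zf m"
  using assms
proof (induction arbitrary: n)
  case fb
  thus ?case by blast
next
  case (fy x)
  hence "x \<in> lay s yf zf (Suc n)" by auto
  thus ?case using fy.IH by blast
next
  case (fz x)
  hence "x \<in> lay s yf zf (Suc n)" by auto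
  thus ?case using fz.IH by blast
qed

theorem proposition4p3:
  fixes p :: int and B :: "int set"
  assumes "prime p"
    and "balanced p B"
    and "B \<noteq> {}"
  shows "\<exists>g\<in>neg_set p B. subset_sums p (shift_set p B g) = zmod p"
proof -
  have p0: "p > 0" using assms(1) prime_gt_0_int by blast
  have Bsub: "B \<subseteq> {0..<p}" using assms(2) by (simp add: balanced_def zmod_def)
  have finB: "finite B" using Bsub finite_subset by blast
  have "\<forall>b\<in>B. \<exists>q. fst q \<in> B \<and> snd q \<in> B \<and> fst q \<noteq> snd q \<and> [2*b = fst q + snd q] (mod p)"
    using assms(2) unfolding balanced_def by fastforce
  from bchoice[OF this] obtain f where f: "\<forall>b\<in>B. fst (f b) \<in> B \<and> snd (f b) \<in> B \<and> fst (f b) \<noteq> snd (f b)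
      \<and> [2*b = fst (f b) + snd (f b)] (mod p)" by blast
  define yf where "yf = (\<lambda>b. fst (f b))"
  define zf where "zf = (\<lambda>b. snd (f b))"
  have H: "\<forall>b\<in>B. yf b \<in> B \<and> zf b \<in> B \<and> yf b \<noteq> zf b \<and> [2*b = yf b + zf b] (mod p)"
    using f by (simp add: yf_def zf_def)
  have Hc: "\<forall>c\<in>B. yf c \<in> B \<and> zf c \<in> B" using H by blast
  define m where "m = Min ((\<lambda>b. card (fwd yf zf b)) ` B)"
  have "m \<in> (\<lambda>b. card (fwd yf zf b)) ` B"
    unfolding m_def using finB assms(3) by (intro Min_in) auto
  then obtain s where s: "s \<in> B" "card (fwd yf zf s) = m" by auto
  have mmin: "\<And>b. b \<in> B \<Longrightarrow> m \<le> card (fwd yf zf b)"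
    unfolding m_def using finB by auto
  define C where "C = fwd yf zf s"
  have CB: "C \<subseteq> B" unfolding C_def by (rule fwd_sub[OF Hc s(1)])
  have finC: "finite C" using CB finB finite_subset by blast
  interpret chipf p s C yf zf
  proof
    show "prime p" by (rule assms(1))
    show "C \<subseteq> {0..<p}" using CB Bsub by blast
    show "finite C" by (rule finC)
    show "s \<in> C" by (simp add: C_def fwd.fb)
    show "\<And>c. c \<in> C \<Longrightarrow> yf c \<in> C \<and> zf c \<in> C" by (simp add: C_def fwd.fy fwd.fz)
    show "\<And>c. c \<in> C \<Longrightarrow> yf c \<noteq> zf c \<and> [2*c = yf c + zf c] (mod p)" using H CB by blast
    show "\<And>c. c \<in> C \<Longrightarrow> \<exists>n. c \<in> lay s yf zf n"
    proof -
      fix c assume c: "c \<in> C"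
      have sub: "fwd yf zf c \<subseteq> C" unfolding C_def using c C_def fwd_trans by blast
      have "card C \<le> card (fwd yf zf c)" using mmin[of c] c CB s(2) C_def by auto
      moreover have "card (fwd yf zf c) \<le> card C" by (rule card_mono[OF finC sub])
      ultimately have "card (fwd yf zf c) = card C" by linarith
      hence "fwd yf zf c = C" by (rule card_subset_eq[OF finC sub])
      hence "s \<in> fwd yf zf c" by (simp add: C_def fwd.fb)
      thus "\<exists>n. c \<in> lay s yf zf n" using fwd_reach[of s yf zf c s 0] by simp
    qed
  qed
  have fullC: "subset_sums p (shift_set p C ((- s) mod p)) = zmod p"
    using full by (simp add: g_def)
  have "subset_sums p (shift_set p B ((- s) mod p)) = zmod p"
  proof
    show "subset_sums p (shift_set p B ((- s) mod p)) \<subseteq> zmod p"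
      using p0 by (auto simp: subset_sums_def zmod_def)
    have "shift_set p C ((- s) mod p) \<subseteq> shift_set p B ((- s) mod p)"
      using CB by (auto simp: shift_set_def)
    hence "subset_sums p (shift_set p C ((- s) mod p)) \<subseteq> subset_sums p (shift_set p B ((- s) mod p))"
      unfolding subset_sums_def by blast
    thus "zmod p \<subseteq> subset_sums p (shift_set p B ((- s) mod p))" using fullC by simp
  qed
  moreover have "(- s) mod p \<in> neg_set p B" using s(1) by (simp add: neg_set_def)
  ultimately show ?thesis by blast
qed

end
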